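(* Let $M\geq 1$, $P=4M-3$, and let $x\in\ell(\mathbb{Z}_P)$ satisfy $x[p]=0$ for all $p=M,\ldots,4M-4$. Then for all $p=1,\ldots,2M-2$, $$\operatorname{CirAut}(x+Rx)[p]=2\operatorname{Re}\langle x,T^px\rangle+\langle x,RT^{-p}x\rangle.$$
   Context: $\ell(\mathbb{Z}_P)$ denotes the space of $P$-periodic functions $u\colon\mathbb{Z}\to\mathbb{C}$, with inner product $\langle u,v\rangle=\sum_{p\in\mathbb{Z}_P}u[p]\overline{v[p]}$. The translation operator is $(T^pu)[p']:=u[p'-p]$ and the reversal operator is $(Ru)[p]:=u[-p]$. The circular autocorrelation is $\operatorname{CirAut}(u)[p]:=\langle u,T^pu\rangle=\sum_{p'\in\mathbb{Z}_P}u[p']\overline{u[p'-p]}$. *)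

theory Defs
  imports Complex_Main
begin

text \<open>Elements of ell(Z_P): functions int \<Rightarrow> complex that are P-periodic.\<close>
definition periodic_fun :: "nat \<Rightarrow> (int \<Rightarrow> complex) \<Rightarrow> bool" where
  "periodic_fun P u \<longleftrightarrow> (\<forall>p. u (p + int P) = u p)"

definition inner_ZP :: "nat \<Rightarrow> (int \<Rightarrow> complex) \<Rightarrow> (int \<Rightarrow> complex) \<Rightarrow> complex" where
  "inner_ZP P u v = (\<Sum>p\<in>{0..<int P}. u p * cnj (v p))"

definition transl :: "int \<Rightarrow> (int \<Rightarrow> complex) \<Rightarrow> (int \<Rightarrow> complex)" where
  "transl p u = (\<lambda>q. u (q - p))"

definition reversal :: "(int \<Rightarrow> complex) \<Rightarrow> (int \<Rightarrow> complex)" where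
  "reversal u = (\<lambda>p. u (- p))"

definition CirAut :: "nat \<Rightarrow> (int \<Rightarrow> complex) \<Rightarrow> int \<Rightarrow> complex" where
  "CirAut P u p = inner_ZP P u (transl p u)"

end

theory Submission
  imports Defs
begin

lemma per_nat: fixes f :: "int \<Rightarrow> complex" and N :: int
  assumes "\<forall>q. f (q + N) = f q"
  shows "f (a + int k * N) = f a"
proof (induction k arbitrary: a)
  case 0 then show ?case by simp
next
  case (Suc k)
  have "f (a + int (Suc k) * N) = f ((a + int k * N) + N)" by (simp add: algebra_simps)
  also have "\<dots> = f (a + int k * N)" using assms by simp
  finally show ?case using Suc by simp
qed

lemma per_int: fixes f :: "int \<Rightarrow> complex" and N :: int
  assumes "\<forall>q. f (q + N) = f q"
  shows "f (a + k * N) = f a"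
proof (cases "k \<ge> 0")
  case True
  then have "k = int (nat k)" by simp
  then show ?thesis using per_nat[OF assms, of a "nat k"] by simp
next
  case False
  define n where "n = nat (- k)"
  have n: "k = - int n" using False by (simp add: n_def)
  have "f ((a + k * N) + int n * N) = f (a + k*N)" by (rule per_nat[OF assms])
  moreover have "(a + k * N) + int n * N = a" using n by (simp add: algebra_simps)
  ultimately show ?thesis by simp
qed

lemma per_mod: fixes f :: "int \<Rightarrow> complex" and N :: int
  assumes "\<forall>q. f (q + N) = f q"
  shows "f (q mod N) = f q"
proof -
  have "f q = f (q mod N + (q div N) * N)" by simp
  also have "\<dots> = f (q mod N)" using per_int[OF assms] by blast
  finally show ?thesis by simp
qed

lemma sum_shift: fixes f :: "int \<Rightarrow> complex" and N :: int
  assumes "\<forall>q. f (q + N) = f q" and N: "N > 0"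
  shows "(\<Sum>q\<in>{0..<N}. f (q + c)) = (\<Sum>q\<in>{0..<N}. f q)"
proof -
  have "(\<Sum>q\<in>{0..<N}. f (q + c)) = (\<Sum>q\<in>{0..<N}. f ((q + c) mod N))"
    using per_mod[OF assms(1)] by simp
  also have "\<dots> = (\<Sum>q\<in>{0..<N}. f q)"
  proof (rule sum.reindex_bij_betw[of "\<lambda>q. (q + c) mod N" _ _ f])
    show "bij_betw (\<lambda>q. (q + c) mod N) {0..<N} {0..<N}"
    proof (rule bij_betw_byWitness[where f'="\<lambda>q. (q - c) mod N"])
      show "\<forall>a\<in>{0..<N}. ((a + c) mod N - c) mod N = a"
        by (auto simp: mod_diff_left_eq)
      show "\<forall>a\<in>{0..<N}. ((a - c) mod N + c) mod N = a"
        by (auto simp: mod_add_left_eq)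
      show "(\<lambda>q. (q + c) mod N) ` {0..<N} \<subseteq> {0..<N}" using N by auto
      show "(\<lambda>q. (q - c) mod N) ` {0..<N} \<subseteq> {0..<N}" using N by auto
    qed
  qed
  finally show ?thesis .
qed

lemma sum_refl: fixes f :: "int \<Rightarrow> complex" and N :: int
  assumes "\<forall>q. f (q + N) = f q" and N: "N > 0"
  shows "(\<Sum>q\<in>{0..<N}. f (- q)) = (\<Sum>q\<in>{0..<N}. f q)"
proof -
  have "(\<Sum>q\<in>{0..<N}. f (- q)) = (\<Sum>q\<in>{0..<N}. f ((- q) mod N))"
    using per_mod[OF assms(1)] by simp
  also have "\<dots> = (\<Sum>q\<in>{0..<N}. f q)"
  proof (rule sum.reindex_bij_betw[of "\<lambda>q. (- q) mod N" _ _ f])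
    show "bij_betw (\<lambda>q. (- q) mod N) {0..<N} {0..<N}"
    proof (rule bij_betw_byWitness[where f'="\<lambda>q. (- q) mod N"])
      show "\<forall>a\<in>{0..<N}. (- ((- a) mod N)) mod N = a"
        by (auto simp: mod_minus_eq)
      show "\<forall>a\<in>{0..<N}. (- ((- a) mod N)) mod N = a"
        by (auto simp: mod_minus_eq)
      show "(\<lambda>q. (- q) mod N) ` {0..<N} \<subseteq> {0..<N}" using N by auto
      show "(\<lambda>q. (- q) mod N) ` {0..<N} \<subseteq> {0..<N}" using N by auto
    qed
  qed
  finally show ?thesis .
qed

theorem lemma1:
  fixes M P :: nat and x :: "int \<Rightarrow> complex"
  assumes "M \<ge> 1" and "P = 4 * M - 3"
    and "periodic_fun P x"
    and "\<forall>p. int M \<le> p \<and> p \<le> 4 * int M - 4 \<longrightarrow> x p = 0"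
  shows "\<forall>p. 1 \<le> p \<and> p \<le> 2 * int M - 2 \<longrightarrow>
    CirAut P (\<lambda>q. x q + reversal x q) p
      = complex_of_real (2 * Re (inner_ZP P x (transl p x)))
        + inner_ZP P x (reversal (transl (- p) x))"
proof (intro allI impI)
  fix p :: int assume p: "1 \<le> p \<and> p \<le> 2 * int M - 2"
  define N where "N = int P"
  have NP: "N = 4 * int M - 3" using assms(1,2) N_def by simp
  have N0: "N > 0" using NP assms(1) by simp
  have per: "\<forall>q. x (q + N) = x q" using assms(3) unfolding periodic_fun_def N_def by simp
  have perc: "\<forall>q. cnj (x (q + N)) = cnj (x q)" using per by simp
  define A where "A = (\<Sum>q\<in>{0..<N}. x q * cnj (x (q - p)))"
  define B where "B = (\<Sum>q\<in>{0..<N}. x q * cnj (x (p - q)))"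
  have S3: "(\<Sum>q\<in>{0..<N}. x (- q) * cnj (x (q - p))) = 0"
  proof (rule sum.neutral, intro ballI)
    fix q assume q0: "q \<in> {0..<N}"
    then have q: "0 \<le> q" "q < N" by auto
    show "x (- q) * cnj (x (q - p)) = 0"
    proof (cases "q < p")
      case True
      have "x (q - p) = x (q - p + N)" using per by simp
      also have "\<dots> = 0" by (rule assms(4)[rule_format]) (use True p q NP in linarith)
      finally show ?thesis by simp
    next
      case False
      show ?thesis
      proof (cases "q - p \<ge> int M")
        case True
        then have "x (q - p) = 0" by (intro assms(4)[rule_format]) (use True p q NP in linarith)
        then show ?thesis by simp
      next
        case F2: False
        have "x (- q) = x (- q + N)" using per[rule_format, of "- q"] by simp
        also have "\<dots> = 0" by (rule assms(4)[rule_format]) (use False F2 p q NP in linarith)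
        finally show ?thesis by simp
      qed
    qed
  qed
  have S4: "(\<Sum>q\<in>{0..<N}. x (- q) * cnj (x (- (q - p)))) = cnj A"
  proof -
    let ?g = "\<lambda>q. x q * cnj (x (q + p))"
    have pg: "\<forall>q. ?g (q + N) = ?g q"
    proof
      fix q
      have "x (q + N + p) = x (q + p)" using per[rule_format, of "q + p"] by (simp add: algebra_simps)
      then show "?g (q + N) = ?g q" using per by simp
    qed
    have "(\<Sum>q\<in>{0..<N}. x (- q) * cnj (x (- (q - p)))) = (\<Sum>q\<in>{0..<N}. ?g (- q))"
      by (simp add: algebra_simps)
    also have "\<dots> = (\<Sum>q\<in>{0..<N}. ?g q)" by (rule sum_refl[OF pg N0])
    also have "\<dots> = (\<Sum>q\<in>{0..<N}. ?g (q + - p))" by (rule sum_shift[OF pg N0, symmetric])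
    also have "\<dots> = cnj A" unfolding A_def by (simp add: cnj_sum mult.commute)
    finally show ?thesis .
  qed
  have "CirAut P (\<lambda>q. x q + reversal x q) p
      = (\<Sum>q\<in>{0..<N}. x q * cnj (x (q - p)) + x q * cnj (x (- (q - p)))
          + x (- q) * cnj (x (q - p)) + x (- q) * cnj (x (- (q - p))))"
    unfolding CirAut_def inner_ZP_def transl_def reversal_def N_def
    by (rule sum.cong) (auto simp: algebra_simps)
  also have "\<dots> = A + B + 0 + cnj A"
    unfolding sum.distrib S3 S4 A_def B_def by (simp add: algebra_simps)
  also have "\<dots> = complex_of_real (2 * Re A) + B"
    using complex_add_cnj[of A] by simp
  moreover have "inner_ZP P x (transl p x) = A"
    unfolding A_def inner_ZP_def transl_def N_def ..
  moreover have "inner_ZP P x (reversal (transl (- p) x)) = B"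
    unfolding B_def inner_ZP_def transl_def reversal_def N_def by simp
  ultimately show "CirAut P (\<lambda>q. x q + reversal x q) p
      = complex_of_real (2 * Re (inner_ZP P x (transl p x)))
        + inner_ZP P x (reversal (transl (- p) x))"
    by simp
qed

end
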